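(* Let $\chi>0$, $n\in\mathbb N\cup\{0\}$, and for $t\ge r_0$ and $z\in\mathbb C$ set $$\mathscr A_n(t;z)=\Big(|z|^{p_c-n}-(|t|^{-\chi}+|z|^2)^{\frac{p_c-n}2}\Big)z^n,\quad \mathscr B_n(t;z)=(|t|^{-\chi}+|z|^2)^{\frac{p_c-n}2}z^n,\quad \widetilde{\mathscr B}_n(t;z)=(|t|^{-\chi}+|z|^2)^{\frac{p_c-n}2}|z|^n.$$ Then, uniformly in $t\ge r_0$ and $z,w\in\mathbb C$: (i) if $p_c\in(0,2)$, then $|\mathscr A_n(t;z)|\lesssim|t|^{-\frac{p_c}2\chi}$; (ii) if $p_c\in(0,1)$, then $|\widetilde{\mathscr B}_n(t;z)-\widetilde{\mathscr B}_n(t;w)|+|\mathscr B_n(t;z)-\mathscr B_n(t;w)|\lesssim|z-w|^{p_c}$ and $|\mathscr A_0(t;z)z|\le|t|^{-p_c\chi}|z|^{1-p_c}$.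
   Context: $d\in\{1,2,3\}$, $\lambda<1/2$ (with $\lambda>-1/3$ if $d=3$), $p_c=2/(d(1-\lambda))$, and $r_0\ge1$ is a fixed number. $A\lesssim B$ means $A\le CB$ with $C$ independent of $t,z,w$. *)

theory Defs
  imports "HOL-Analysis.Analysis"
begin

definition p_crit :: "nat \<Rightarrow> real \<Rightarrow> real" where
  "p_crit d lam = 2 / (real d * (1 - lam))"

definition calA :: "real \<Rightarrow> real \<Rightarrow> nat \<Rightarrow> real \<Rightarrow> complex \<Rightarrow> complex" where
  "calA pc chi n t z =
     complex_of_real (cmod z powr (pc - real n)
        - (\<bar>t\<bar> powr (-chi) + (cmod z)^2) powr ((pc - real n) / 2)) * z ^ n"

definition calB :: "real \<Rightarrow> real \<Rightarrow> nat \<Rightarrow> real \<Rightarrow> complex \<Rightarrow> complex" where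
  "calB pc chi n t z =
     complex_of_real ((\<bar>t\<bar> powr (-chi) + (cmod z)^2) powr ((pc - real n) / 2)) * z ^ n"

definition calBt :: "real \<Rightarrow> real \<Rightarrow> nat \<Rightarrow> real \<Rightarrow> complex \<Rightarrow> real" where
  "calBt pc chi n t z =
     (\<bar>t\<bar> powr (-chi) + (cmod z)^2) powr ((pc - real n) / 2) * (cmod z) ^ n"

end

theory Submission imports Defs begin


lemma mvt_powr:
  fixes x y q :: real
  assumes "0 < x" "x \<le> y" "q \<le> 1"
  shows "\<bar>y powr q - x powr q\<bar> \<le> \<bar>q\<bar> * (y - x) * x powr (q - 1)"
proof (cases "x = y")
  case True then show ?thesis by simp
next
  case False
  then have xy: "x < y" using assms by simp
  have "\<exists>z. x < z \<and> z < y \<and> y powr q - x powr q = (y - x) * (q * z powr (q - 1))"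
    by (rule MVT2[OF xy]) (rule has_real_derivative_powr, use assms in auto)
  then obtain z where z: "x < z" "z < y" "y powr q - x powr q = (y - x) * (q * z powr (q - 1))" by blast
  have "z powr (q - 1) \<le> x powr (q - 1)"
    by (rule powr_mono2') (use assms z in auto)
  then have "\<bar>y powr q - x powr q\<bar> = (y - x) * \<bar>q\<bar> * z powr (q - 1)"
    using z xy by (simp add: abs_mult)
  also have "\<dots> \<le> (y - x) * \<bar>q\<bar> * x powr (q - 1)"
    using \<open>z powr (q - 1) \<le> x powr (q - 1)\<close> xy by (intro mult_left_mono) auto
  finally show ?thesis by (simp add: mult_ac)
qed

lemma subadd_powr:
  fixes x y q :: real
  assumes "0 \<le> x" "0 \<le> y" "0 \<le> q" "q \<le> 1"
  shows "(x + y) powr q \<le> x powr q + y powr q"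
proof (cases "x + y = 0")
  case True then show ?thesis using assms by simp
next
  case False
  define S where "S = x + y"
  have S: "S > 0" using False assms S_def by simp
  have a: "x / S \<le> (x / S) powr q"
    using powr_mono'[of q 1 "x/S"] assms S S_def by (simp add: divide_simps)
  have b: "y / S \<le> (y / S) powr q"
    using powr_mono'[of q 1 "y/S"] assms S S_def by (simp add: divide_simps)
  have "1 = x / S + y / S" using S S_def by (simp add: divide_simps)
  also have "\<dots> \<le> (x powr q + y powr q) / S powr q"
    using a b assms S by (simp add: powr_divide add_divide_distrib)
  finally have "S powr q \<le> x powr q + y powr q" using S by (simp add: divide_simps)
  then show ?thesis by (simp add: S_def)
qed


lemma sq_powr: "0 < (r::real) \<Longrightarrow> (r^2) powr (x/2) = r powr x"
proof -
  assume r: "0 < r"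
  have "r^2 = r powr 2" using r powr_realpow[of r 2] by simp
  then show ?thesis by (simp add: powr_powr)
qed

lemma partA_core:
  fixes e R a b :: real
  assumes e: "e > 0" and R: "R > 0" and b: "b \<ge> 0" and ab: "0 < a + b" "a + b < 1"
  shows "\<bar>R powr a - (e + R) powr a\<bar> * R powr b \<le> (\<bar>a\<bar> + 3) * e powr (a + b)"
proof (cases "e \<le> R")
  case True
  have "\<bar>(e + R) powr a - R powr a\<bar> \<le> \<bar>a\<bar> * (e + R - R) * R powr (a - 1)"
    by (rule mvt_powr) (use R e ab b in auto)
  then have 1: "\<bar>R powr a - (e + R) powr a\<bar> * R powr b \<le> \<bar>a\<bar> * e * R powr (a - 1) * R powr b"
    by (simp add: abs_minus_commute mult_right_mono)
  have 2: "R powr (a - 1) * R powr b = R powr (a + b - 1)" by (simp add: powr_add[symmetric] algebra_simps)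
  have 3: "R powr (a + b - 1) \<le> e powr (a + b - 1)"
    by (rule powr_mono2') (use True e ab in auto)
  have 4: "e * e powr (a + b - 1) = e powr (a + b)"
    using e by (simp add: powr_add[symmetric] powr_diff)
  have "\<bar>a\<bar> * e * R powr (a - 1) * R powr b = \<bar>a\<bar> * e * R powr (a + b - 1)"
    using 2 by (simp add: mult_ac)
  also have "\<dots> \<le> \<bar>a\<bar> * e * e powr (a + b - 1)"
    using 3 e by (intro mult_left_mono) auto
  also have "\<dots> = \<bar>a\<bar> * e powr (a + b)" using 4 by (simp add: mult_ac)
  also have "\<dots> \<le> (\<bar>a\<bar> + 3) * e powr (a + b)" by (intro mult_right_mono) auto
  finally show ?thesis using 1 by linarith
next
  case False
  have Rb: "R powr b \<le> e powr b" by (rule powr_mono2) (use False R b in auto)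
  have Rab: "R powr a * R powr b \<le> e powr (a + b)"
    using powr_mono2[of "a+b" R e] False R ab by (simp add: powr_add)
  have ea: "(e + R) powr a \<le> 2 * e powr a"
  proof (cases "a \<ge> 0")
    case True
    have "(e + R) powr a \<le> (2 * e) powr a" by (rule powr_mono2) (use True False e R in auto)
    also have "\<dots> = 2 powr a * e powr a" using e by (simp add: powr_mult)
    also have "2 powr a \<le> 2 powr 1" by (rule powr_mono) (use ab b in auto)
    then have "2 powr a * e powr a \<le> 2 * e powr a" by (intro mult_right_mono) auto
    finally show ?thesis .
  next
    case F: False
    have "(e + R) powr a \<le> e powr a" by (rule powr_mono2') (use F R e in auto)
    then show ?thesis by (smt (verit) powr_ge_zero)
  qed
  have "\<bar>R powr a - (e + R) powr a\<bar> * R powr b \<le> (R powr a + (e + R) powr a) * R powr b"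
    by (intro mult_right_mono) (auto simp: abs_le_iff)
  also have "\<dots> = R powr a * R powr b + (e + R) powr a * R powr b" by (simp add: algebra_simps)
  also have "(e + R) powr a * R powr b \<le> 2 * e powr a * e powr b"
    using ea Rb by (intro mult_mono) auto
  also have "2 * e powr a * e powr b = 2 * e powr (a + b)" by (simp add: powr_add)
  finally have "\<bar>R powr a - (e + R) powr a\<bar> * R powr b \<le> 3 * e powr (a + b)" using Rab by linarith
  also have "\<dots> \<le> (\<bar>a\<bar> + 3) * e powr (a + b)" by (intro mult_right_mono) auto
  finally show ?thesis .
qed

lemma partC_core:
  fixes e R c :: real
  assumes e: "e > 0" and R: "R > 0" and c: "0 < c" "c < 1/2"
  shows "\<bar>R powr c - (e + R) powr c\<bar> * R powr (1/2) \<le> e powr (2*c) * R powr (1/2 - c)"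
proof (cases "e \<le> R")
  case True
  have "\<bar>(e + R) powr c - R powr c\<bar> \<le> \<bar>c\<bar> * (e + R - R) * R powr (c - 1)"
    by (rule mvt_powr) (use R e c in auto)
  then have 1: "\<bar>R powr c - (e + R) powr c\<bar> * R powr (1/2) \<le> c * e * R powr (c - 1) * R powr (1/2)"
    using c by (simp add: abs_minus_commute mult_right_mono)
  have 3: "R powr (2*c - 1) \<le> e powr (2*c - 1)"
    by (rule powr_mono2') (use True e c in auto)
  have "c * e * R powr (c - 1) * R powr (1/2) = c * (e * R powr (2*c - 1)) * R powr (1/2 - c)"
    by (simp add: powr_add[symmetric] mult_ac)
  also have "\<dots> \<le> 1 * (e * e powr (2*c - 1)) * R powr (1/2 - c)"
    using 3 e c by (intro mult_right_mono mult_mono) auto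
  also have "e * e powr (2*c - 1) = e powr (2*c)"
    using e by (simp add: powr_add[symmetric] powr_diff)
  finally show ?thesis using 1 by linarith
next
  case False
  have lo: "R powr c \<le> (e + R) powr c" by (rule powr_mono2) (use e R c in auto)
  have hi: "(e + R) powr c \<le> e powr c + R powr c" by (rule subadd_powr) (use e R c in auto)
  have Rc: "R powr c \<le> e powr c" by (rule powr_mono2) (use False R c in auto)
  have "\<bar>R powr c - (e + R) powr c\<bar> * R powr (1/2) \<le> e powr c * R powr (1/2)"
    using lo hi by (intro mult_right_mono) auto
  also have "\<dots> = e powr c * R powr c * R powr (1/2 - c)" by (simp add: powr_add[symmetric] mult_ac)
  also have "\<dots> \<le> e powr c * e powr c * R powr (1/2 - c)"
    using Rc by (intro mult_right_mono mult_left_mono) auto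
  also have "\<dots> = e powr (2*c) * R powr (1/2 - c)" by (simp add: powr_add[symmetric])
  finally show ?thesis .
qed


definition phi :: "real \<Rightarrow> real \<Rightarrow> nat \<Rightarrow> real \<Rightarrow> real" where
  "phi e p n r = (e + r^2) powr ((p - real n)/2) * r^n"

lemma phi_nonneg: "0 \<le> phi e p n r" if "0 \<le> r" using that by (simp add: phi_def)

lemma phi_le:
  assumes n: "n \<ge> 1" and e: "e > 0" and r: "r \<ge> 0" and p: "p < 1"
  shows "phi e p n r \<le> r powr p"
proof (cases "r = 0")
  case True then show ?thesis using n by (simp add: phi_def zero_power)
next
  case False
  then have r': "r > 0" using r by simp
  have "(e + r^2) powr ((p - real n)/2) \<le> (r^2) powr ((p - real n)/2)"
    by (rule powr_mono2') (use n p r' e in auto)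
  also have "\<dots> = r powr (p - real n)" using sq_powr[OF r'] .
  finally have "phi e p n r \<le> r powr (p - real n) * r ^ n"
    unfolding phi_def using r by (intro mult_right_mono) simp_all
  also have "\<dots> = r powr (p - real n) * r powr (real n)" using powr_realpow[OF r', of n] by simp
  also have "\<dots> = r powr p" by (simp add: powr_add[symmetric])
  finally show ?thesis .
qed

lemma pow_diff_le:
  fixes a b :: real
  assumes "0 \<le> b" "b \<le> a"
  shows "a^(Suc m) - b^(Suc m) \<le> real (Suc m) * a^m * (a - b)"
proof (induction m)
  case 0 then show ?case by simp
next
  case (Suc m)
  have "a^(Suc (Suc m)) - b^(Suc (Suc m)) = a * (a^(Suc m) - b^(Suc m)) + b^(Suc m) * (a - b)"
    by (simp add: algebra_simps)
  also have "\<dots> \<le> a * (real (Suc m) * a^m * (a - b)) + a^(Suc m) * (a - b)"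
    using Suc assms by (intro add_mono mult_left_mono mult_right_mono power_mono) auto
  also have "\<dots> = real (Suc (Suc m)) * a^(Suc m) * (a - b)" by (simp add: algebra_simps)
  finally show ?case .
qed

lemma two_powr_le: "0 \<le> p \<Longrightarrow> p \<le> 1 \<Longrightarrow> (2::real) powr p \<le> 2"
  using powr_mono[of p 1 2] by simp

lemma phi_holder:
  assumes e: "e > 0" and p: "0 < p" "p < 1" and b: "0 \<le> b" "b \<le> a"
  shows "\<bar>phi e p n a - phi e p n b\<bar> \<le> (2 + 4 * (real n + 1) * 2^n) * (a - b) powr p"
proof -
  define h where "h = a - b"
  define q where "q = (p - real n)/2"
  define K where "K = 2 + 4 * (real n + 1) * 2^n"
  have K1: "2 \<le> K" unfolding K_def by simp
  show ?thesis
  proof (cases "h = 0")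
    case True then show ?thesis by (simp add: h_def)
  next
    case False
    then have h: "h > 0" using b h_def by simp
    have hp: "0 \<le> h powr p" by simp
    show ?thesis
    proof (cases "a \<le> 2 * h")
      case True
      have 2: "a powr p \<le> 2 * h powr p"
      proof -
        have "a powr p \<le> (2 * h) powr p" by (rule powr_mono2) (use True p b in auto)
        also have "\<dots> = 2 powr p * h powr p" using h by (simp add: powr_mult)
        also have "\<dots> \<le> 2 * h powr p" using two_powr_le[of p] p by (intro mult_right_mono) auto
        finally show ?thesis .
      qed
      have "\<bar>phi e p n a - phi e p n b\<bar> \<le> 2 * h powr p"
      proof (cases "n = 0")
        case True
        have mono: "phi e p n b \<le> phi e p n a"
          unfolding phi_def using True b p e by (auto intro!: powr_mono2 power_mono)
        have "phi e p n a = ((e + b^2) + (a^2 - b^2)) powr (p/2)"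
          using True by (simp add: phi_def)
        also have "\<dots> \<le> (e + b^2) powr (p/2) + (a^2 - b^2) powr (p/2)"
          by (rule subadd_powr) (use e b p in \<open>auto intro: power_mono\<close>)
        also have "(a^2 - b^2) powr (p/2) \<le> (a^2) powr (p/2)"
          by (rule powr_mono2) (use e b p in \<open>auto intro: power_mono\<close>)
        also have "(a^2) powr (p/2) = a powr p"
          using sq_powr[of a p] b h h_def by simp
        finally have "phi e p n a \<le> phi e p n b + a powr p"
          using True by (simp add: phi_def)
        then show ?thesis using mono 2 by linarith
      next
        case False
        have "phi e p n a \<le> a powr p" by (rule phi_le) (use False e b p in auto)
        moreover have "phi e p n b \<le> b powr p" by (rule phi_le) (use False e b p in auto)
        moreover have "b powr p \<le> a powr p" by (rule powr_mono2) (use b p in auto)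
        moreover have "0 \<le> phi e p n a" "0 \<le> phi e p n b" using b by (auto intro: phi_nonneg)
        ultimately show ?thesis using 2 by linarith
      qed
      then show ?thesis using mult_right_mono[OF K1 hp] unfolding h_def K_def
        by linarith
    next
      case False
      have bh: "h < b" using False h_def by simp
      have bpos: "b > 0" using bh h by simp
      have a2b: "a \<le> 2 * b" using bh h_def by simp
      have bp: "b powr (p - 1) \<le> h powr (p - 1)" by (rule powr_mono2') (use bh h p in auto)
      have hh: "h * h powr (p - 1) = h powr p" using h by (simp add: powr_diff)
      have split: "phi e p n a - phi e p n b =
          ((e + a^2) powr q - (e + b^2) powr q) * a^n + (e + b^2) powr q * (a^n - b^n)"
        unfolding phi_def q_def by (simp add: algebra_simps)
      have q1: "q \<le> 1" using p unfolding q_def by simp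
      have T1a: "\<bar>(e + a^2) powr q - (e + b^2) powr q\<bar> \<le> \<bar>q\<bar> * ((e + a^2) - (e + b^2)) * (e + b^2) powr (q - 1)"
        by (rule mvt_powr) (use e b q1 in \<open>auto intro: power_mono add_pos_nonneg\<close>)
      have T1b: "(e + b^2) powr (q - 1) \<le> (b^2) powr (q - 1)"
        by (rule powr_mono2') (use e bpos q1 in auto)
      have T1c: "(b^2) powr (q - 1) = b powr (p - real n - 2)"
        using sq_powr[OF bpos, of "p - real n - 2"] unfolding q_def by (simp add: field_simps)
      have T1d: "(e + a^2) - (e + b^2) \<le> 3 * b * h"
      proof -
        have "0 \<le> (a - b) * (2 * b - a)" using a2b b by (intro mult_nonneg_nonneg) auto
        then show ?thesis unfolding h_def by (simp add: power2_eq_square algebra_simps)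
      qed
      have T1e: "a^n \<le> 2^n * b powr (real n)"
        using power_mono[OF a2b, of n] b bpos by (simp add: powr_realpow power_mult_distrib)
      have qabs: "3 * \<bar>q\<bar> \<le> 2 * (real n + 1)"
      proof -
        have "\<bar>p - real n\<bar> \<le> real n + 1" using p by (simp add: abs_le_iff)
        then show ?thesis unfolding q_def by simp
      qed
      have T1: "\<bar>((e + a^2) powr q - (e + b^2) powr q) * a^n\<bar> \<le> 2 * (real n + 1) * 2^n * h powr p"
      proof -
        have A0: "\<bar>q\<bar> * ((e + a^2) - (e + b^2)) * (e + b^2) powr (q - 1) \<le> \<bar>q\<bar> * (3 * b * h) * (b^2) powr (q - 1)"
          using T1d T1b b h by (intro mult_mono mult_left_mono) (auto intro: power_mono)
        have A: "\<bar>(e + a^2) powr q - (e + b^2) powr q\<bar> \<le> \<bar>q\<bar> * (3 * b * h) * b powr (p - real n - 2)"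
          using order.trans[OF T1a A0] T1c by simp
        have "\<bar>((e + a^2) powr q - (e + b^2) powr q) * a^n\<bar> = \<bar>(e + a^2) powr q - (e + b^2) powr q\<bar> * a^n"
          using b by (simp add: abs_mult)
        also have "\<dots> \<le> (\<bar>q\<bar> * (3 * b * h) * b powr (p - real n - 2)) * (2^n * b powr (real n))"
          using A T1e b h by (intro mult_mono) auto
        also have "\<dots> = (3 * \<bar>q\<bar>) * 2^n * (h * (b * b powr (p - real n - 2) * b powr (real n)))"
          by (simp add: algebra_simps)
        also have "b * b powr (p - real n - 2) * b powr (real n) = b powr 1 * b powr (p - real n - 2) * b powr (real n)"
          using bpos by simp
        also have "\<dots> = b powr (1 + (p - real n - 2) + real n)"
          by (simp only: powr_add)
        also have "1 + (p - real n - 2) + real n = p - 1" by simp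
        also have "(3 * \<bar>q\<bar>) * 2^n * (h * b powr (p - 1)) \<le> (2 * (real n + 1)) * 2^n * (h * h powr (p - 1))"
        proof (rule mult_mono)
          show "3 * \<bar>q\<bar> * 2^n \<le> 2 * (real n + 1) * 2^n" using qabs by (intro mult_right_mono) auto
          show "h * b powr (p - 1) \<le> h * h powr (p - 1)" using bp h by (intro mult_left_mono) auto
        qed (use h in auto)
        finally show ?thesis using hh by simp
      qed
      have T2: "\<bar>(e + b^2) powr q * (a^n - b^n)\<bar> \<le> real n * 2^n * h powr p"
      proof (cases "n = 0")
        case True then show ?thesis by simp
      next
        case False
        then obtain m where m: "n = Suc m" by (cases n) auto
        have d0: "0 \<le> a^n - b^n" using b by (simp add: power_mono)
        have d1: "a^n - b^n \<le> real n * a^m * h" using pow_diff_le[OF b] m h_def by simp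
        have d2: "a^m \<le> 2^m * b powr (real m)"
          using power_mono[OF a2b, of m] b bpos by (simp add: powr_realpow power_mult_distrib)
        have eq: "(e + b^2) powr q \<le> b powr (p - real n)"
          using powr_mono2'[of q "b^2" "e + b^2"] sq_powr[OF bpos, of "p - real n"] e bpos p False
          unfolding q_def by simp
        have "\<bar>(e + b^2) powr q * (a^n - b^n)\<bar> = (e + b^2) powr q * (a^n - b^n)" using d0 by simp
        also have "\<dots> \<le> b powr (p - real n) * (real n * (2^m * b powr (real m)) * h)"
          using eq d0 d1 d2 h b by (intro mult_mono order.trans[OF d1]) (auto intro!: mult_mono)
        also have "\<dots> = real n * 2^m * h * (b powr (p - real n) * b powr (real m))" by (simp add: algebra_simps)
        also have "b powr (p - real n) * b powr (real m) = b powr (p - 1)"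
          using m by (simp add: powr_add[symmetric])
        also have "real n * 2^m * h * b powr (p - 1) \<le> real n * 2^n * h * h powr (p - 1)"
        proof (rule mult_mono)
          show "real n * 2^m * h \<le> real n * 2^n * h"
            using h m by (intro mult_right_mono mult_left_mono) auto
        qed (use bp h in auto)
        also have "real n * 2^n * h * h powr (p - 1) = real n * 2^n * (h * h powr (p - 1))" by simp
        finally show ?thesis using hh by simp
      qed
      have "\<bar>phi e p n a - phi e p n b\<bar> \<le> 2 * (real n + 1) * 2^n * h powr p + real n * 2^n * h powr p"
        using split T1 T2 by (smt (verit))
      also have "\<dots> = (2 * (real n + 1) * 2^n + real n * 2^n) * h powr p" by (simp add: algebra_simps)
      also have "\<dots> \<le> K * h powr p"
      proof (rule mult_right_mono)
        have "real n * 2^n \<le> 2 * (real n + 1) * 2^n" by (intro mult_right_mono) auto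
        then show "2 * (real n + 1) * 2^n + real n * 2^n \<le> K" unfolding K_def by linarith
      qed (use hp in auto)
      finally show ?thesis unfolding K_def h_def .
    qed
  qed
qed


definition Bc :: "real \<Rightarrow> real \<Rightarrow> nat \<Rightarrow> complex \<Rightarrow> complex" where
  "Bc e p n z = complex_of_real ((e + (cmod z)^2) powr ((p - real n)/2)) * z ^ n"

lemma norm_Bc: "cmod (Bc e p n z) = phi e p n (cmod z)"
  by (simp add: Bc_def phi_def norm_mult norm_power)

lemma B_holder:
  assumes e: "e > 0" and p: "0 < p" "p < 1" and ba: "cmod w \<le> cmod z"
  shows "cmod (Bc e p n z - Bc e p n w) \<le> ((2 + 4 * (real n + 1) * 2^n) + 2 * real n + 4) * cmod (z - w) powr p"
proof -
  define K where "K = 2 + 4 * (real n + 1) * 2^n"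
  define a where "a = cmod z"
  define b where "b = cmod w"
  define \<delta> where "\<delta> = cmod (z - w)"
  have K0: "0 \<le> K" unfolding K_def by simp
  have ab\<delta>: "a - b \<le> \<delta>" unfolding a_def b_def \<delta>_def by (rule norm_triangle_ineq2)
  have b0: "0 \<le> b" "b \<le> a" using ba unfolding a_def b_def by auto
  have H: "\<bar>phi e p n a - phi e p n b\<bar> \<le> K * \<delta> powr p"
  proof -
    have "\<bar>phi e p n a - phi e p n b\<bar> \<le> K * (a - b) powr p"
      unfolding K_def by (rule phi_holder) (use e p b0 in auto)
    also have "(a - b) powr p \<le> \<delta> powr p" by (rule powr_mono2) (use p b0 ab\<delta> in auto)
    then have "K * (a - b) powr p \<le> K * \<delta> powr p" using K0 by (intro mult_left_mono) auto
    finally show ?thesis .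
  qed
  have dp: "0 \<le> \<delta> powr p" by simp
  show ?thesis
  proof (cases "\<delta> = 0")
    case True then have "z = w" unfolding \<delta>_def by simp
    then show ?thesis by simp
  next
    case d0: False
    then have dpos: "\<delta> > 0" unfolding \<delta>_def by simp
    show ?thesis
    proof (cases "n = 0")
      case True
      have "Bc e p n z - Bc e p n w = complex_of_real (phi e p n a - phi e p n b)"
        using True unfolding Bc_def phi_def a_def b_def by simp
      then have "cmod (Bc e p n z - Bc e p n w) \<le> K * \<delta> powr p" using H by (simp only: norm_of_real)
      also have "\<dots> \<le> (K + 2 * real n + 4) * \<delta> powr p" using dp by (intro mult_right_mono) auto
      finally show ?thesis unfolding K_def \<delta>_def .
    next
      case n1: False
      show ?thesis
      proof (cases "a \<le> 2 * \<delta>")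
        case True
        have pa: "phi e p n a \<le> a powr p" by (rule phi_le) (use n1 e b0 p in auto)
        have pb: "phi e p n b \<le> b powr p" by (rule phi_le) (use n1 e b0 p in auto)
        have "b powr p \<le> a powr p" by (rule powr_mono2) (use b0 p in auto)
        have a2: "a powr p \<le> 2 * \<delta> powr p"
        proof -
          have "a powr p \<le> (2 * \<delta>) powr p" by (rule powr_mono2) (use True p b0 in auto)
          also have "\<dots> = 2 powr p * \<delta> powr p" using dpos by (simp add: powr_mult)
          also have "\<dots> \<le> 2 * \<delta> powr p" using two_powr_le[of p] p by (intro mult_right_mono) auto
          finally show ?thesis .
        qed
        have "cmod (Bc e p n z - Bc e p n w) \<le> cmod (Bc e p n z) + cmod (Bc e p n w)"
          by (rule norm_triangle_ineq4)
        also have "\<dots> = phi e p n a + phi e p n b" unfolding a_def b_def norm_Bc ..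
        also have "\<dots> \<le> 4 * \<delta> powr p" using pa pb a2 \<open>b powr p \<le> a powr p\<close> by linarith
        also have "\<dots> \<le> (K + 2 * real n + 4) * \<delta> powr p" using dp K0 by (intro mult_right_mono) auto
        finally show ?thesis unfolding K_def \<delta>_def .
      next
        case False
        have bpos: "b > \<delta>" using False ab\<delta> by simp
        have b1: "b > 0" using bpos dpos by simp
        have a1: "a > 0" using b1 b0 by simp
        define u where "u = z / complex_of_real a"
        define v where "v = w / complex_of_real b"
        have zu: "z = complex_of_real a * u" using a1 unfolding u_def by simp
        have wv: "w = complex_of_real b * v" using b1 unfolding v_def by simp
        have nu: "cmod u = 1" using a1 unfolding u_def a_def by (simp add: norm_divide)
        have nv: "cmod v = 1" using b1 unfolding v_def b_def by (simp add: norm_divide)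
        have Bz: "Bc e p n z = complex_of_real (phi e p n a) * u^n"
          unfolding Bc_def phi_def a_def by (subst (2) zu) (simp add: power_mult_distrib a_def)
        have Bw: "Bc e p n w = complex_of_real (phi e p n b) * v^n"
          unfolding Bc_def phi_def b_def by (subst (2) wv) (simp add: power_mult_distrib b_def)
        have diff: "Bc e p n z - Bc e p n w
            = complex_of_real (phi e p n a - phi e p n b) * u^n + complex_of_real (phi e p n b) * (u^n - v^n)"
          unfolding Bz Bw by (simp add: algebra_simps)
        have uv: "b * cmod (u - v) \<le> 2 * \<delta>"
        proof -
          have "complex_of_real b * (u - v) = (z - w) - complex_of_real ((a - b) / a) * z"
            using a1 b1 unfolding u_def v_def by (simp add: field_simps)
          then have "b * cmod (u - v) = cmod ((z - w) - complex_of_real ((a - b) / a) * z)"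
            using b1 by (metis abs_of_pos norm_mult norm_of_real)
          also have "\<dots> \<le> cmod (z - w) + cmod (complex_of_real ((a - b) / a) * z)" by (rule norm_triangle_ineq4)
          also have "cmod (complex_of_real ((a - b) / a) * z) = \<bar>(a - b) / a\<bar> * a"
            by (simp only: norm_mult norm_of_real a_def)
          also have "\<dots> = a - b" using a1 b0 by simp
          finally show ?thesis using ab\<delta> unfolding \<delta>_def by simp
        qed
        have pb: "phi e p n b \<le> b powr p" by (rule phi_le) (use n1 e b0 p in auto)
        have T2: "phi e p n b * cmod (u^n - v^n) \<le> 2 * real n * \<delta> powr p"
        proof -
          have "cmod (u^n - v^n) \<le> real n * cmod (u - v)" by (rule norm_power_diff) (use nu nv in auto)
          then have "phi e p n b * cmod (u^n - v^n) \<le> b powr p * (real n * cmod (u - v))"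
            using pb b0 by (intro mult_mono) (auto intro: phi_nonneg)
          also have "\<dots> = real n * (b powr (p - 1) * (b * cmod (u - v)))"
            using b1 by (simp add: powr_diff)
          also have "\<dots> \<le> real n * (\<delta> powr (p - 1) * (2 * \<delta>))"
          proof (rule mult_left_mono)
            have bd: "b powr (p - 1) \<le> \<delta> powr (p - 1)" by (rule powr_mono2') (use p dpos bpos in auto)
            show "b powr (p - 1) * (b * cmod (u - v)) \<le> \<delta> powr (p - 1) * (2 * \<delta>)"
              by (rule mult_mono[OF bd uv]) (use b0 in auto)
          qed auto
          also have "\<dots> = 2 * real n * \<delta> powr p" using dpos by (simp add: powr_diff)
          finally show ?thesis .
        qed
        have "cmod (Bc e p n z - Bc e p n w)
            \<le> cmod (complex_of_real (phi e p n a - phi e p n b) * u^n) + cmod (complex_of_real (phi e p n b) * (u^n - v^n))"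
          unfolding diff by (rule norm_triangle_ineq)
        also have "\<dots> = \<bar>phi e p n a - phi e p n b\<bar> + phi e p n b * cmod (u^n - v^n)"
          using nu b0 by (simp add: norm_mult norm_power phi_nonneg del: of_real_diff)
        also have "\<dots> \<le> K * \<delta> powr p + 2 * real n * \<delta> powr p" using H T2 by linarith
        also have "\<dots> \<le> (K + 2 * real n + 4) * \<delta> powr p" using dp by (simp add: algebra_simps)
        finally show ?thesis unfolding K_def \<delta>_def .
      qed
    qed
  qed
qed


lemma partA:
  assumes e: "e > 0" and p: "0 < p" "p < 2"
  shows "cmod (complex_of_real (cmod z powr (p - real n) - (e + (cmod z)^2) powr ((p - real n) / 2)) * z ^ n)
         \<le> (real n + 4) * e powr (p / 2)"
proof (cases "z = 0")
  case True
  show ?thesis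
  proof (cases "n = 0")
    case True with \<open>z = 0\<close> show ?thesis using e by simp
  next
    case False with \<open>z = 0\<close> show ?thesis using e by (simp add: zero_power)
  qed
next
  case False
  define r where "r = cmod z"
  have r: "r > 0" using False unfolding r_def by simp
  define R where "R = r^2"
  have R: "R > 0" using r unfolding R_def by simp
  have c1: "r powr (p - real n) = R powr ((p - real n)/2)" unfolding R_def using sq_powr[OF r] by simp
  have c2: "r ^ n = R powr (real n / 2)" unfolding R_def using sq_powr[OF r, of "real n"] powr_realpow[OF r] by simp
  have "cmod (complex_of_real (cmod z powr (p - real n) - (e + (cmod z)^2) powr ((p - real n) / 2)) * z ^ n)
      = \<bar>r powr (p - real n) - (e + R) powr ((p - real n)/2)\<bar> * r ^ n"
    by (simp add: norm_mult norm_power r_def R_def del: of_real_diff)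
  also have "\<dots> = \<bar>R powr ((p - real n)/2) - (e + R) powr ((p - real n)/2)\<bar> * R powr (real n / 2)"
    by (simp only: c1 c2)
  also have "\<dots> \<le> (\<bar>(p - real n)/2\<bar> + 3) * e powr ((p - real n)/2 + real n / 2)"
    by (rule partA_core) (use e R p in \<open>auto simp: field_simps\<close>)
  also have "(p - real n)/2 + real n / 2 = p / 2" by (simp add: field_simps)
  also have "(\<bar>(p - real n)/2\<bar> + 3) * e powr (p / 2) \<le> (real n + 4) * e powr (p / 2)"
    using p by (intro mult_right_mono) (auto simp: abs_le_iff)
  finally show ?thesis .
qed

lemma partC:
  assumes e: "e > 0" and p: "0 < p" "p < 1"
  shows "cmod (complex_of_real (cmod z powr p - (e + (cmod z)^2) powr (p / 2)) * z)
         \<le> e powr p * cmod z powr (1 - p)"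
proof (cases "z = 0")
  case True then show ?thesis by simp
next
  case False
  define r where "r = cmod z"
  have r: "r > 0" using False unfolding r_def by simp
  define R where "R = r^2"
  have R: "R > 0" using r unfolding R_def by simp
  have c1: "r powr p = R powr (p/2)" unfolding R_def using sq_powr[OF r] by simp
  have c2: "r = R powr (1 / 2)" unfolding R_def using sq_powr[OF r, of 1] r by simp
  have c3: "r powr (1 - p) = R powr (1/2 - p/2)" unfolding R_def using sq_powr[OF r, of "1 - p"] by (simp add: field_simps)
  have "cmod (complex_of_real (cmod z powr p - (e + (cmod z)^2) powr (p / 2)) * z)
      = \<bar>r powr p - (e + R) powr (p/2)\<bar> * r"
    by (simp add: norm_mult r_def R_def del: of_real_diff)
  also have "\<dots> = \<bar>R powr (p/2) - (e + R) powr (p/2)\<bar> * R powr (1/2)"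
    by (simp only: c1 flip: c2)
  also have "\<dots> \<le> e powr (2 * (p/2)) * R powr (1/2 - p/2)"
    by (rule partC_core) (use e R p in auto)
  also have "\<dots> = e powr p * cmod z powr (1 - p)" using c3 r_def by simp
  finally show ?thesis .
qed

theorem lemma4p4:
  fixes d :: nat and lam r0 chi :: real and n :: nat
  assumes "d \<in> {1, 2, 3}"
    and "lam < 1/2"
    and "d = 3 \<longrightarrow> lam > - 1/3"
    and "r0 \<ge> 1"
    and "chi > 0"
  shows "(p_crit d lam \<in> {0<..<2} \<longrightarrow>
            (\<exists>C. \<forall>t z. t \<ge> r0 \<longrightarrow>
               cmod (calA (p_crit d lam) chi n t z) \<le> C * \<bar>t\<bar> powr (- (p_crit d lam / 2) * chi)))
       \<and> (p_crit d lam \<in> {0<..<1} \<longrightarrow>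
            (\<exists>C. \<forall>t z w. t \<ge> r0 \<longrightarrow>
               \<bar>calBt (p_crit d lam) chi n t z - calBt (p_crit d lam) chi n t w\<bar>
               + cmod (calB (p_crit d lam) chi n t z - calB (p_crit d lam) chi n t w)
               \<le> C * cmod (z - w) powr (p_crit d lam))
          \<and> (\<forall>t z. t \<ge> r0 \<longrightarrow>
               cmod (calA (p_crit d lam) chi 0 t z * z)
               \<le> \<bar>t\<bar> powr (- (p_crit d lam) * chi) * cmod z powr (1 - p_crit d lam)))"
proof -
  define p where "p = p_crit d lam"
  have epos: "\<bar>t\<bar> powr (- chi) > 0" if "t \<ge> r0" for t using that assms(4) by simp
  have I: "p \<in> {0<..<2} \<longrightarrow> (\<exists>C. \<forall>t z. t \<ge> r0 \<longrightarrow>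
               cmod (calA p chi n t z) \<le> C * \<bar>t\<bar> powr (- (p / 2) * chi))"
  proof
    assume p: "p \<in> {0<..<2}"
    show "\<exists>C. \<forall>t z. t \<ge> r0 \<longrightarrow> cmod (calA p chi n t z) \<le> C * \<bar>t\<bar> powr (- (p / 2) * chi)"
    proof (intro exI allI impI)
      fix t z assume t: "t \<ge> r0"
      have "cmod (calA p chi n t z) \<le> (real n + 4) * (\<bar>t\<bar> powr (- chi)) powr (p / 2)"
        unfolding calA_def by (rule partA) (use p epos[OF t] in auto)
      also have "(\<bar>t\<bar> powr (- chi)) powr (p / 2) = \<bar>t\<bar> powr (- (p / 2) * chi)"
        by (simp add: powr_powr mult_ac)
      finally show "cmod (calA p chi n t z) \<le> (real n + 4) * \<bar>t\<bar> powr (- (p / 2) * chi)" .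
    qed
  qed
  have II: "p \<in> {0<..<1} \<longrightarrow>
            (\<exists>C. \<forall>t z w. t \<ge> r0 \<longrightarrow>
               \<bar>calBt p chi n t z - calBt p chi n t w\<bar>
               + cmod (calB p chi n t z - calB p chi n t w)
               \<le> C * cmod (z - w) powr p)
          \<and> (\<forall>t z. t \<ge> r0 \<longrightarrow>
               cmod (calA p chi 0 t z * z)
               \<le> \<bar>t\<bar> powr (- p * chi) * cmod z powr (1 - p))"
  proof
    assume p: "p \<in> {0<..<1}"
    define K where "K = 2 + 4 * (real n + 1) * 2^n"
    show "(\<exists>C. \<forall>t z w. t \<ge> r0 \<longrightarrow>
               \<bar>calBt p chi n t z - calBt p chi n t w\<bar>
               + cmod (calB p chi n t z - calB p chi n t w)
               \<le> C * cmod (z - w) powr p)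
          \<and> (\<forall>t z. t \<ge> r0 \<longrightarrow>
               cmod (calA p chi 0 t z * z)
               \<le> \<bar>t\<bar> powr (- p * chi) * cmod z powr (1 - p))"
    proof (intro conjI exI allI impI)
      fix t z w assume t: "t \<ge> r0"
      define e where "e = \<bar>t\<bar> powr (- chi)"
      have e: "e > 0" using epos[OF t] e_def by simp
      have Bt: "calBt p chi n t x = phi e p n (cmod x)" for x unfolding calBt_def phi_def e_def ..
      have B: "calB p chi n t x = Bc e p n x" for x unfolding calB_def Bc_def e_def ..
      have h1: "\<bar>phi e p n (cmod z) - phi e p n (cmod w)\<bar> \<le> K * cmod (z - w) powr p"
      proof -
        have "\<bar>phi e p n (cmod z) - phi e p n (cmod w)\<bar> \<le> K * \<bar>cmod z - cmod w\<bar> powr p"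
        proof (cases "cmod w \<le> cmod z")
          case True
          then show ?thesis unfolding K_def using phi_holder[of e p "cmod w" "cmod z" n] e p by simp
        next
          case False
          then show ?thesis unfolding K_def using phi_holder[of e p "cmod z" "cmod w" n] e p
            by (simp add: abs_minus_commute)
        qed
        also have "\<bar>cmod z - cmod w\<bar> powr p \<le> cmod (z - w) powr p"
          by (rule powr_mono2) (use p norm_triangle_ineq3 in auto)
        then have "K * \<bar>cmod z - cmod w\<bar> powr p \<le> K * cmod (z - w) powr p"
          unfolding K_def by (intro mult_left_mono) auto
        finally show ?thesis .
      qed
      have h2: "cmod (Bc e p n z - Bc e p n w) \<le> (K + 2 * real n + 4) * cmod (z - w) powr p"
      proof (cases "cmod w \<le> cmod z")
        case True
        then show ?thesis unfolding K_def using B_holder[OF e _ _ True] p by simp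
      next
        case False
        then have "cmod (Bc e p n w - Bc e p n z) \<le> (K + 2 * real n + 4) * cmod (w - z) powr p"
          unfolding K_def using B_holder[OF e _ _ less_imp_le[OF not_le_imp_less[OF False]]] p by simp
        then show ?thesis by (simp add: norm_minus_commute)
      qed
      show "\<bar>calBt p chi n t z - calBt p chi n t w\<bar> + cmod (calB p chi n t z - calB p chi n t w)
            \<le> (K + (K + 2 * real n + 4)) * cmod (z - w) powr p"
        unfolding Bt B using h1 h2 by (simp add: algebra_simps)
    next
      fix t z assume t: "t \<ge> r0"
      have "cmod (calA p chi 0 t z * z) \<le> (\<bar>t\<bar> powr (- chi)) powr p * cmod z powr (1 - p)"
        unfolding calA_def using partC[of "\<bar>t\<bar> powr (- chi)" p z] p epos[OF t] by simp
      also have "(\<bar>t\<bar> powr (- chi)) powr p = \<bar>t\<bar> powr (- p * chi)"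
        by (simp add: powr_powr mult_ac)
      finally show "cmod (calA p chi 0 t z * z) \<le> \<bar>t\<bar> powr (- p * chi) * cmod z powr (1 - p)" .
    qed
  qed
  from I II show ?thesis unfolding p_def by blast
qed

end
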